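(* For $s\in\mathcal S^{2,2}$ write $V^n(s)=(x^{(n)},y^{(n)},u^{(n)},v^{(n)})$. Then: 1. $\frac{5}{12}\le x^{(2)}+y^{(2)}\le\frac12$ for every $s\in\mathcal S^{2,2}$; 2. there exists $\alpha\in(0,1)$ such that $v^{(n+1)}\le\alpha\,y^{(n)}$ for every $s\in\mathcal S^{2,2}$ and every $n\ge2$.
   Context: $\mathcal S^{2,2}=\{(x,y,u,v)\in\mathbb{R}^4: x,y,u,v\ge0,\ x+y+u+v=1,\ x+y>0,\ u+v>0\}$. $V:\mathcal S^{2,2}\to\mathcal S^{2,2}$ is $V(x,y,u,v)=(x',y',u',v')$ with $x'=\dfrac{2xu+yu}{4(x+y)(u+v)}$, $y'=\dfrac{6xv+3yu+4yv}{12(x+y)(u+v)}$, $u'=\dfrac{6xu+6xv+3yu+4yv}{12(x+y)(u+v)}$, $v'=\dfrac{3yu+4yv}{12(x+y)(u+v)}$. $V^n$ denotes the $n$-fold iterate. *)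

theory Defs
  imports Complex_Main
begin

definition S22 :: "(real \<times> real \<times> real \<times> real) set" where
  "S22 = {(x, y, u, v). x \<ge> 0 \<and> y \<ge> 0 \<and> u \<ge> 0 \<and> v \<ge> 0 \<and>
                         x + y + u + v = 1 \<and> x + y > 0 \<and> u + v > 0}"

definition V :: "real \<times> real \<times> real \<times> real \<Rightarrow> real \<times> real \<times> real \<times> real" where
  "V s = (case s of (x, y, u, v) \<Rightarrow>
     ((2*x*u + y*u) / (4*(x+y)*(u+v)),
      (6*x*v + 3*y*u + 4*y*v) / (12*(x+y)*(u+v)),
      (6*x*u + 6*x*v + 3*y*u + 4*y*v) / (12*(x+y)*(u+v)),
      (3*y*u + 4*y*v) / (12*(x+y)*(u+v))))"

definition cx :: "real \<times> real \<times> real \<times> real \<Rightarrow> real" where "cx s = fst s"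
definition cy :: "real \<times> real \<times> real \<times> real \<Rightarrow> real" where "cy s = fst (snd s)"
definition cu :: "real \<times> real \<times> real \<times> real \<Rightarrow> real" where "cu s = fst (snd (snd s))"
definition cv :: "real \<times> real \<times> real \<times> real \<Rightarrow> real" where "cv s = snd (snd (snd s))"

end

theory Submission
  imports Defs
begin

lemma Vc:
  "cx (V (x,y,u,v)) = (2*x*u + y*u) / (4*(x+y)*(u+v))"
  "cy (V (x,y,u,v)) = (6*x*v + 3*y*u + 4*y*v) / (12*(x+y)*(u+v))"
  "cu (V (x,y,u,v)) = (6*x*u + 6*x*v + 3*y*u + 4*y*v) / (12*(x+y)*(u+v))"
  "cv (V (x,y,u,v)) = (3*y*u + 4*y*v) / (12*(x+y)*(u+v))"
  by (simp_all add: V_def cx_def cy_def cu_def cv_def)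

lemma S22E: "s \<in> S22 \<Longrightarrow> (\<And>x y u v. s = (x,y,u,v) \<Longrightarrow> x \<ge> 0 \<Longrightarrow> y \<ge> 0 \<Longrightarrow> u \<ge> 0 \<Longrightarrow> v \<ge> 0
   \<Longrightarrow> x+y+u+v = 1 \<Longrightarrow> x+y > 0 \<Longrightarrow> u+v > 0 \<Longrightarrow> P) \<Longrightarrow> P"
  unfolding S22_def by auto

lemma S22_c: "s \<in> S22 \<Longrightarrow> cx s \<ge> 0 \<and> cy s \<ge> 0 \<and> cu s \<ge> 0 \<and> cv s \<ge> 0 \<and>
   cx s + cy s + cu s + cv s = 1 \<and> cx s + cy s > 0 \<and> cu s + cv s > 0"
  unfolding S22_def cx_def cy_def cu_def cv_def by auto

lemma key:
  assumes "s \<in> S22"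
  shows "V s \<in> S22"
    "cx (V s) + cy (V s) = 1/2 - cy s * cv s / (6*(cx s + cy s)*(cu s + cv s))"
    "2 * cv (V s) \<le> cu (V s) + cv (V s)"
    "cv (V s) * (3*(cx s + cy s)) \<le> cy s"
proof -
  obtain x y u v where s: "s = (x,y,u,v)" and h: "x \<ge> 0" "y \<ge> 0" "u \<ge> 0" "v \<ge> 0"
    "x+y+u+v = 1" "x+y > 0" "u+v > 0" using assms by (rule S22E)
  have c: "cx s = x" "cy s = y" "cu s = u" "cv s = v" using s by (simp_all add: cx_def cy_def cu_def cv_def)
  define D where "D = 12*(x+y)*(u+v)"
  have D: "D > 0" unfolding D_def using h by simp
  have nz: "x+y \<noteq> 0" "u+v \<noteq> 0" using h by auto
  have e1: "cx (V s) = (6*x*u + 3*y*u) / D"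
  proof -
    have "cx (V s) = (3*(2*x*u + y*u)) / (3*(4*(x+y)*(u+v)))" unfolding s Vc
      by (rule mult_divide_mult_cancel_left[symmetric]) simp
    also have "\<dots> = (6*x*u + 3*y*u) / D" unfolding D_def by (simp add: algebra_simps)
    finally show ?thesis .
  qed
  have e2: "cy (V s) = (6*x*v + 3*y*u + 4*y*v) / D" unfolding s Vc D_def by simp
  have e3: "cu (V s) = (6*x*u + 6*x*v + 3*y*u + 4*y*v) / D" unfolding s Vc D_def by simp
  have e4: "cv (V s) = (3*y*u + 4*y*v) / D" unfolding s Vc D_def by simp
  have sum: "(6*x*u + 3*y*u) + (6*x*v + 3*y*u + 4*y*v) + (6*x*u + 6*x*v + 3*y*u + 4*y*v) + (3*y*u + 4*y*v) = D"
    unfolding D_def using h(5) by (simp add: algebra_simps)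
  show "V s \<in> S22"
  proof -
    have a: "cx (V s) \<ge> 0" "cy (V s) \<ge> 0" "cu (V s) \<ge> 0" "cv (V s) \<ge> 0"
      unfolding e1 e2 e3 e4 using D h by simp_all
    have b: "cx (V s) + cy (V s) + cu (V s) + cv (V s) = 1"
      unfolding e1 e2 e3 e4 add_divide_distrib[symmetric] sum using D by simp
    have "6*x*v + 3*y*u + 4*y*v + (6*x*u + 3*y*u) > 0"
    proof -
      have "6*x*v + 3*y*u + 4*y*v + (6*x*u + 3*y*u) \<ge> 4*(x+y)*(u+v)"
        using h by (simp add: algebra_simps mult_nonneg_nonneg)
      moreover have "4*(x+y)*(u+v) > 0" using h by simp
      ultimately show ?thesis by linarith
    qed
    then have d: "cx (V s) + cy (V s) > 0" unfolding e1 e2 using D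
      by (simp add: add_divide_distrib[symmetric])
    have "(6*x*u + 6*x*v + 3*y*u + 4*y*v) + (3*y*u + 4*y*v) \<ge> 6*(x+y)*(u+v)"
      using h by (simp add: algebra_simps mult_nonneg_nonneg)
    moreover have "6*(x+y)*(u+v) > 0" using h by simp
    ultimately have f: "cu (V s) + cv (V s) > 0" unfolding e3 e4 using D
      by (simp add: add_divide_distrib[symmetric])
    have "V s = (cx (V s), cy (V s), cu (V s), cv (V s))" by (simp add: cx_def cy_def cu_def cv_def)
    then show ?thesis using a b d f unfolding S22_def by (auto simp del: V_def)
  qed
  show "cx (V s) + cy (V s) = 1/2 - cy s * cv s / (6*(cx s + cy s)*(cu s + cv s))"
  proof -
    have "cx (V s) + cy (V s) = ((6*x*u + 3*y*u) + (6*x*v + 3*y*u + 4*y*v)) / D"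
      unfolding e1 e2 add_divide_distrib by simp
    also have "(6*x*u + 3*y*u) + (6*x*v + 3*y*u + 4*y*v) = D/2 - 2*(y*v)"
      unfolding D_def by (simp add: algebra_simps)
    also have "(D/2 - 2*(y*v)) / D = 1/2 - 2*(y*v)/D" using D by (simp add: diff_divide_distrib)
    also have "2*(y*v)/D = y*v/(6*(x+y)*(u+v))"
    proof -
      have "D = 2*(6*(x+y)*(u+v))" unfolding D_def by simp
      then show ?thesis by (simp only: mult_divide_mult_cancel_left)
    qed
    finally show ?thesis unfolding c .
  qed
  show "2 * cv (V s) \<le> cu (V s) + cv (V s)"
    unfolding e3 e4 using D h by (simp add: field_simps mult_nonneg_nonneg)
  show "cv (V s) * (3*(cx s + cy s)) \<le> cy s"
  proof -
    have "(3*y*u + 4*y*v) * (3*(x+y)) \<le> y * D"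
      unfolding D_def using h by (simp add: algebra_simps mult_nonneg_nonneg mult_left_mono)
    then show ?thesis unfolding c e4 using D by (simp add: field_simps)
  qed
qed

lemma p2:
  assumes "s \<in> S22"
  shows "5/12 \<le> cx (V (V s)) + cy (V (V s)) \<and> cx (V (V s)) + cy (V (V s)) \<le> 1/2"
proof -
  let ?t = "V s"
  have t: "?t \<in> S22" using key(1)[OF assms] .
  have c: "cx ?t \<ge> 0" "cy ?t \<ge> 0" "cu ?t \<ge> 0" "cv ?t \<ge> 0" "cx ?t + cy ?t > 0" "cu ?t + cv ?t > 0"
    using S22_c[OF t] by auto
  have eq: "cx (V ?t) + cy (V ?t) = 1/2 - cy ?t * cv ?t / (6*(cx ?t + cy ?t)*(cu ?t + cv ?t))"
    using key(2)[OF t] .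
  have b2: "2 * cv ?t \<le> cu ?t + cv ?t" using key(3)[OF assms] .
  have "cy ?t * cv ?t * 2 \<le> (cx ?t + cy ?t) * (cu ?t + cv ?t)"
  proof -
    have "cy ?t * (2 * cv ?t) \<le> (cx ?t + cy ?t) * (cu ?t + cv ?t)"
      using c b2 by (intro mult_mono) auto
    then show ?thesis by (simp add: algebra_simps)
  qed
  then have "cy ?t * cv ?t \<le> 1/12 * (6*(cx ?t + cy ?t)*(cu ?t + cv ?t))"
    by (simp only: mult.assoc)
  moreover have "6*(cx ?t + cy ?t)*(cu ?t + cv ?t) > 0" using c by simp
  ultimately have "cy ?t * cv ?t / (6*(cx ?t + cy ?t)*(cu ?t + cv ?t)) \<le> 1/12"
    by (simp add: divide_le_eq)
  moreover have "cy ?t * cv ?t / (6*(cx ?t + cy ?t)*(cu ?t + cv ?t)) \<ge> 0"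
    using c by simp
  ultimately show ?thesis unfolding eq by linarith
qed

lemma Vpow_S22: "s \<in> S22 \<Longrightarrow> (V ^^ n) s \<in> S22"
  by (induction n) (auto intro: key(1))

theorem lemma4p2:
  shows "(\<forall>s\<in>S22. 5/12 \<le> cx ((V ^^ 2) s) + cy ((V ^^ 2) s) \<and>
                    cx ((V ^^ 2) s) + cy ((V ^^ 2) s) \<le> 1/2) \<and>
         (\<exists>\<alpha>::real. 0 < \<alpha> \<and> \<alpha> < 1 \<and>
            (\<forall>s\<in>S22. \<forall>n::nat. n \<ge> 2 \<longrightarrow>
               cv ((V ^^ (n+1)) s) \<le> \<alpha> * cy ((V ^^ n) s)))"
proof
  show "\<forall>s\<in>S22. 5/12 \<le> cx ((V ^^ 2) s) + cy ((V ^^ 2) s) \<and>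
                    cx ((V ^^ 2) s) + cy ((V ^^ 2) s) \<le> 1/2"
    using p2 by (simp add: numeral_2_eq_2)
  show "\<exists>\<alpha>::real. 0 < \<alpha> \<and> \<alpha> < 1 \<and>
            (\<forall>s\<in>S22. \<forall>n::nat. n \<ge> 2 \<longrightarrow>
               cv ((V ^^ (n+1)) s) \<le> \<alpha> * cy ((V ^^ n) s))"
  proof (intro exI[of _ "4/5"] conjI ballI allI impI)
    fix s n assume s: "s \<in> S22" and n: "(2::nat) \<le> n"
    obtain k where k: "n = k + 2" using n by (metis le_add_diff_inverse2)
    let ?r = "(V ^^ k) s"
    have r: "?r \<in> S22" using Vpow_S22[OF s] .
    have tn: "(V ^^ n) s = V (V ?r)" unfolding k by (simp add: funpow_add numeral_2_eq_2)
    have tn1: "(V ^^ (n+1)) s = V ((V ^^ n) s)" by simp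
    let ?t = "(V ^^ n) s"
    have t: "?t \<in> S22" using Vpow_S22[OF s] .
    have pt: "5/12 \<le> cx ?t + cy ?t" using p2[OF r] tn by simp
    have vb: "cv (V ?t) * (3*(cx ?t + cy ?t)) \<le> cy ?t" using key(4)[OF t] .
    have "cv (V ?t) \<ge> 0" using S22_c[OF key(1)[OF t]] by simp
    then have "cv (V ?t) * (3*(5/12)) \<le> cv (V ?t) * (3*(cx ?t + cy ?t))"
      using pt by (intro mult_left_mono) auto
    with vb have "cv (V ?t) * (5/4) \<le> cy ?t" by simp
    then show "cv ((V ^^ (n+1)) s) \<le> 4/5 * cy ((V ^^ n) s)" unfolding tn1 by simp
  qed simp_all
qed

end
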